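(* $\mathsf{sjfCQ}(\mathsf{TI}_{\mathsf{fin}})=\mathsf{CQ}(\mathsf{TI}_{\mathsf{fin}})=\mathsf{UCQ}(\mathsf{TI}_{\mathsf{fin}})$.
   Context: Fix a countably infinite universe $U$. A database schema is a finite nonempty set of relation symbols with arities; facts are $R(u_1,\dots,u_{\mathrm{ar}(R)})$ with $u_i\in U$; an instance is a finite set of facts; $\mathrm{adom}(D)$ is the set of elements of $U$ occurring in $D$. A probabilistic database (PDB) is a discrete probability space $(\mathbb D,P)$ with $\mathbb D$ a nonempty countable set of instances; it is finite if $\mathbb D$ is finite. A PDB is tuple-independent if for all pairwise distinct facts $f_1,\dots,f_k$, $\Pr(f_1\in I,\dots,f_k\in I)=\prod_i\Pr(f_i\in I)$; $\mathsf{TI}_{\mathsf{fin}}$ is the class of finite tuple-independent PDBs. Formulas use relational atoms $R(\bar u)$ ($\bar u$ variables or constants) and equality atoms and are evaluated under active domain semantics. A conjunctive query (CQ) is built from atoms using only $\exists,\wedge$; it is self-join free (sjfCQ) if each relation symbol occurs at most once; a union of conjunctive queries (UCQ) is built using only $\exists,\wedge,\vee$. An $\mathsf L$-view consists of one $\mathsf L$-formula $\Phi_R(x_1,\dots,x_{\mathrm{ar}(R)})$ per output relation $R$, mapping $D$ to the instance of all $R(\bar a)$ with $\bar a$ over $\mathrm{adom}(D)\cup\mathrm{adom}(\Phi_R)$ and $D\models\Phi_R[\bar a]$. The image of a PDB $(\mathbb D,P)$ under a view $V$ is the PDB on $V(\mathbb D)$ with $P'(\{D'\})=P(\{D:V(D)=D'\})$;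 $\mathsf L(\mathsf{TI}_{\mathsf{fin}})$ is the class of images of finite TI-PDBs under $\mathsf L$-views. *)

theory Defs
  imports "HOL-Probability.Probability"
begin

(* Universe U: the natural numbers (a fixed countably infinite set).
   A relation symbol is a pair (name, arity). *)
type_synonym rel = "nat \<times> nat"

definition arity :: "rel \<Rightarrow> nat" where "arity R = snd R"

type_synonym fact = "rel \<times> nat list"
type_synonym inst = "fact set"

definition schema :: "rel set \<Rightarrow> bool" where
  "schema \<tau> \<longleftrightarrow> finite \<tau> \<and> \<tau> \<noteq> {}"

definition fact_over :: "rel set \<Rightarrow> fact \<Rightarrow> bool" where
  "fact_over \<tau> f \<longleftrightarrow> fst f \<in> \<tau> \<and> length (snd f) = arity (fst f)"

definition instance_over :: "rel set \<Rightarrow> inst \<Rightarrow> bool" where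
  "instance_over \<tau> D \<longleftrightarrow> finite D \<and> (\<forall>f\<in>D. fact_over \<tau> f)"

definition adom :: "inst \<Rightarrow> nat set" where
  "adom D = (\<Union>f\<in>D. set (snd f))"

definition pdb :: "rel set \<Rightarrow> inst set \<Rightarrow> inst pmf \<Rightarrow> bool" where
  "pdb \<tau> \<D> P \<longleftrightarrow> schema \<tau> \<and> \<D> \<noteq> {} \<and> countable \<D> \<and> (\<forall>D\<in>\<D>. instance_over \<tau> D)
      \<and> set_pmf P \<subseteq> \<D>"

definition tuple_independent :: "inst pmf \<Rightarrow> bool" where
  "tuple_independent P \<longleftrightarrow>
     (\<forall>F::fact set. finite F \<longrightarrow>
        measure_pmf.prob P {I. F \<subseteq> I} = (\<Prod>f\<in>F. measure_pmf.prob P {I. f \<in> I}))"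

definition ti_fin :: "rel set \<Rightarrow> inst set \<Rightarrow> inst pmf \<Rightarrow> bool" where
  "ti_fin \<tau> \<D> P \<longleftrightarrow> pdb \<tau> \<D> P \<and> finite \<D> \<and> tuple_independent P"

datatype trm = Var nat | Cst nat

datatype fml = Atom rel "trm list" | Equ trm trm | Neg fml | Conj fml fml | Disj fml fml
  | Exists nat fml

fun eval_trm :: "(nat \<Rightarrow> nat) \<Rightarrow> trm \<Rightarrow> nat" where
  "eval_trm \<sigma> (Var x) = \<sigma> x"
| "eval_trm \<sigma> (Cst c) = c"

fun trm_csts :: "trm \<Rightarrow> nat set" where
  "trm_csts (Var x) = {}"
| "trm_csts (Cst c) = {c}"

fun trm_vars :: "trm \<Rightarrow> nat set" where
  "trm_vars (Var x) = {x}"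
| "trm_vars (Cst c) = {}"

fun fml_consts :: "fml \<Rightarrow> nat set" where
  "fml_consts (Atom R ts) = (\<Union>t\<in>set ts. trm_csts t)"
| "fml_consts (Equ s t) = trm_csts s \<union> trm_csts t"
| "fml_consts (Neg \<phi>) = fml_consts \<phi>"
| "fml_consts (Conj \<phi> \<psi>) = fml_consts \<phi> \<union> fml_consts \<psi>"
| "fml_consts (Disj \<phi> \<psi>) = fml_consts \<phi> \<union> fml_consts \<psi>"
| "fml_consts (Exists x \<phi>) = fml_consts \<phi>"

fun fv :: "fml \<Rightarrow> nat set" where
  "fv (Atom R ts) = (\<Union>t\<in>set ts. trm_vars t)"
| "fv (Equ s t) = trm_vars s \<union> trm_vars t"
| "fv (Neg \<phi>) = fv \<phi>"
| "fv (Conj \<phi> \<psi>) = fv \<phi> \<union> fv \<psi>"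
| "fv (Disj \<phi> \<psi>) = fv \<phi> \<union> fv \<psi>"
| "fv (Exists x \<phi>) = fv \<phi> - {x}"

fun rels :: "fml \<Rightarrow> rel list" where
  "rels (Atom R ts) = [R]"
| "rels (Equ s t) = []"
| "rels (Neg \<phi>) = rels \<phi>"
| "rels (Conj \<phi> \<psi>) = rels \<phi> @ rels \<psi>"
| "rels (Disj \<phi> \<psi>) = rels \<phi> @ rels \<psi>"
| "rels (Exists x \<phi>) = rels \<phi>"

fun wf_fml :: "rel set \<Rightarrow> fml \<Rightarrow> bool" where
  "wf_fml \<tau> (Atom R ts) \<longleftrightarrow> R \<in> \<tau> \<and> length ts = arity R"
| "wf_fml \<tau> (Equ s t) \<longleftrightarrow> True"
| "wf_fml \<tau> (Neg \<phi>) \<longleftrightarrow> wf_fml \<tau> \<phi>"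
| "wf_fml \<tau> (Conj \<phi> \<psi>) \<longleftrightarrow> wf_fml \<tau> \<phi> \<and> wf_fml \<tau> \<psi>"
| "wf_fml \<tau> (Disj \<phi> \<psi>) \<longleftrightarrow> wf_fml \<tau> \<phi> \<and> wf_fml \<tau> \<psi>"
| "wf_fml \<tau> (Exists x \<phi>) \<longleftrightarrow> wf_fml \<tau> \<phi>"

(* satisfaction; quantifiers range over the set A (active domain) *)
fun sat :: "nat set \<Rightarrow> inst \<Rightarrow> (nat \<Rightarrow> nat) \<Rightarrow> fml \<Rightarrow> bool" where
  "sat A D \<sigma> (Atom R ts) \<longleftrightarrow> (R, map (eval_trm \<sigma>) ts) \<in> D"
| "sat A D \<sigma> (Equ s t) \<longleftrightarrow> eval_trm \<sigma> s = eval_trm \<sigma> t"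
| "sat A D \<sigma> (Neg \<phi>) \<longleftrightarrow> \<not> sat A D \<sigma> \<phi>"
| "sat A D \<sigma> (Conj \<phi> \<psi>) \<longleftrightarrow> sat A D \<sigma> \<phi> \<and> sat A D \<sigma> \<psi>"
| "sat A D \<sigma> (Disj \<phi> \<psi>) \<longleftrightarrow> sat A D \<sigma> \<phi> \<or> sat A D \<sigma> \<psi>"
| "sat A D \<sigma> (Exists x \<phi>) \<longleftrightarrow> (\<exists>a\<in>A. sat A D (\<sigma>(x := a)) \<phi>)"

fun is_cq :: "fml \<Rightarrow> bool" where
  "is_cq (Atom R ts) = True"
| "is_cq (Equ s t) = True"
| "is_cq (Neg \<phi>) = False"
| "is_cq (Conj \<phi> \<psi>) = (is_cq \<phi> \<and> is_cq \<psi>)"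
| "is_cq (Disj \<phi> \<psi>) = False"
| "is_cq (Exists x \<phi>) = is_cq \<phi>"

definition is_sjfcq :: "fml \<Rightarrow> bool" where
  "is_sjfcq \<phi> \<longleftrightarrow> is_cq \<phi> \<and> distinct (rels \<phi>)"

fun is_ucq :: "fml \<Rightarrow> bool" where
  "is_ucq (Atom R ts) = True"
| "is_ucq (Equ s t) = True"
| "is_ucq (Neg \<phi>) = False"
| "is_ucq (Conj \<phi> \<psi>) = (is_ucq \<phi> \<and> is_ucq \<psi>)"
| "is_ucq (Disj \<phi> \<psi>) = (is_ucq \<phi> \<and> is_ucq \<psi>)"
| "is_ucq (Exists x \<phi>) = is_ucq \<phi>"

(* A view from schema tau to output schema tau': for each output symbol R a formula
   Phi_R(x_1,...,x_ar(R)) given as (list of distinct free variables, formula). *)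
type_synonym view = "rel \<Rightarrow> nat list \<times> fml"

definition is_view :: "(fml \<Rightarrow> bool) \<Rightarrow> rel set \<Rightarrow> rel set \<Rightarrow> view \<Rightarrow> bool" where
  "is_view L \<tau> \<tau>' V \<longleftrightarrow> schema \<tau>' \<and>
     (\<forall>R\<in>\<tau>'. length (fst (V R)) = arity R \<and> distinct (fst (V R)) \<and>
        fv (snd (V R)) \<subseteq> set (fst (V R)) \<and> wf_fml \<tau> (snd (V R)) \<and> L (snd (V R)))"

definition assign :: "nat list \<Rightarrow> nat list \<Rightarrow> nat \<Rightarrow> nat" where
  "assign xs as v = (case map_of (zip xs as) v of Some a \<Rightarrow> a | None \<Rightarrow> 0)"

definition apply_view :: "rel set \<Rightarrow> view \<Rightarrow> inst \<Rightarrow> inst" where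
  "apply_view \<tau>' V D =
     {(R, as) | R as. R \<in> \<tau>' \<and> length as = arity R \<and>
        set as \<subseteq> adom D \<union> fml_consts (snd (V R)) \<and>
        sat (adom D \<union> fml_consts (snd (V R))) D (assign (fst (V R)) as) (snd (V R))}"

(* L(TI_fin): images of finite TI-PDBs under L-views; a PDB is recorded as
   (schema, set of instances, probability distribution). *)
definition L_TI_fin :: "(fml \<Rightarrow> bool) \<Rightarrow> (rel set \<times> inst set \<times> inst pmf) set" where
  "L_TI_fin L = {(\<tau>', apply_view \<tau>' V ` \<D>, map_pmf (apply_view \<tau>' V) P) | \<tau>' \<tau> \<D> P V.
      ti_fin \<tau> \<D> P \<and> is_view L \<tau> \<tau>' V}"

end

theory Submission
  imports Defs
begin

lemma cq_ucq: "is_cq \<phi> \<Longrightarrow> is_ucq \<phi>"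
  by (induction \<phi>) auto

lemma L_mono: "(\<And>\<phi>. L \<phi> \<Longrightarrow> L' \<phi>) \<Longrightarrow> L_TI_fin L \<subseteq> L_TI_fin L'"
  unfolding L_TI_fin_def is_view_def by blast

lemma sat_mono: "sat A D \<sigma> \<phi> \<Longrightarrow> A \<subseteq> A' \<Longrightarrow> D \<subseteq> D' \<Longrightarrow> is_ucq \<phi> \<Longrightarrow> sat A' D' \<sigma> \<phi>"
  by (induction \<phi> arbitrary: \<sigma>) auto

lemma adom_mono: "D \<subseteq> D' \<Longrightarrow> adom D \<subseteq> adom D'"
  unfolding adom_def by auto

lemma view_mono:
  assumes "is_view is_ucq \<tau> \<tau>' V" "D \<subseteq> D'"
  shows "apply_view \<tau>' V D \<subseteq> apply_view \<tau>' V D'"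
proof
  fix x assume x: "x \<in> apply_view \<tau>' V D"
  then obtain R as where xe: "x = (R, as)" and R: "R \<in> \<tau>'" "length as = arity R"
    "set as \<subseteq> adom D \<union> fml_consts (snd (V R))"
    "sat (adom D \<union> fml_consts (snd (V R))) D (assign (fst (V R)) as) (snd (V R))"
    unfolding apply_view_def by blast
  have u: "is_ucq (snd (V R))" using assms(1) R(1) unfolding is_view_def by blast
  have A: "adom D \<union> fml_consts (snd (V R)) \<subseteq> adom D' \<union> fml_consts (snd (V R))"
    using adom_mono[OF assms(2)] by blast
  show "x \<in> apply_view \<tau>' V D'"
    unfolding apply_view_def xe using R sat_mono[OF R(4) A assms(2) u] A by blast
qed

lemma sat_exs: "sat A D \<sigma> (foldr Exists ys \<phi>) \<longleftrightarrow>
  (\<exists>\<tau>. (\<forall>v. v \<notin> set ys \<longrightarrow> \<tau> v = \<sigma> v) \<and> (\<forall>v\<in>set ys. \<tau> v \<in> A) \<and> sat A D \<tau> \<phi>)"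
proof (induction ys arbitrary: \<sigma>)
  case Nil
  have e: "(\<forall>v. v \<notin> set [] \<longrightarrow> \<tau> v = \<sigma> v) \<longleftrightarrow> \<tau> = \<sigma>" for \<tau> :: "nat \<Rightarrow> nat"
    by (simp add: fun_eq_iff)
  show ?case unfolding e by simp
next
  case (Cons y ys)
  show ?case
  proof
    assume "sat A D \<sigma> (foldr Exists (y # ys) \<phi>)"
    then obtain a where a: "a \<in> A" "sat A D (\<sigma>(y := a)) (foldr Exists ys \<phi>)" by auto
    then obtain \<tau> where t: "\<forall>v. v \<notin> set ys \<longrightarrow> \<tau> v = (\<sigma>(y := a)) v" "\<forall>v\<in>set ys. \<tau> v \<in> A" "sat A D \<tau> \<phi>"
      using Cons.IH by blast
    have ty: "\<tau> y \<in> A"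
    proof (cases "y \<in> set ys")
      case True then show ?thesis using t(2) by blast
    next
      case False then have "\<tau> y = a" using t(1) by simp
      then show ?thesis using a(1) by simp
    qed
    have "\<forall>v. v \<notin> set (y # ys) \<longrightarrow> \<tau> v = \<sigma> v" using t(1) by simp
    moreover have "\<forall>v\<in>set (y # ys). \<tau> v \<in> A" using t(2) ty by simp
    ultimately show "\<exists>\<tau>. (\<forall>v. v \<notin> set (y # ys) \<longrightarrow> \<tau> v = \<sigma> v) \<and> (\<forall>v\<in>set (y # ys). \<tau> v \<in> A) \<and> sat A D \<tau> \<phi>"
      using t(3) by blast
  next
    assume "\<exists>\<tau>. (\<forall>v. v \<notin> set (y # ys) \<longrightarrow> \<tau> v = \<sigma> v) \<and> (\<forall>v\<in>set (y # ys). \<tau> v \<in> A) \<and> sat A D \<tau> \<phi>"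
    then obtain \<tau> where t: "\<forall>v. v \<notin> set (y # ys) \<longrightarrow> \<tau> v = \<sigma> v" "\<forall>v\<in>set (y # ys). \<tau> v \<in> A" "sat A D \<tau> \<phi>"
      by blast
    have "\<forall>v. v \<notin> set ys \<longrightarrow> \<tau> v = (\<sigma>(y := \<tau> y)) v" using t(1) by simp
    moreover have "\<forall>v\<in>set ys. \<tau> v \<in> A" using t(2) by simp
    ultimately have "sat A D (\<sigma>(y := \<tau> y)) (foldr Exists ys \<phi>)" using Cons.IH t(3) by blast
    moreover have "\<tau> y \<in> A" using t(2) by simp
    ultimately show "sat A D \<sigma> (foldr Exists (y # ys) \<phi>)" by auto
  qed
qed

lemma sat_conjs: "sat A D \<sigma> (foldr Conj ps q) \<longleftrightarrow> (\<forall>p\<in>set ps. sat A D \<sigma> p) \<and> sat A D \<sigma> q"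
  by (induction ps) auto

lemma fv_exs: "fv (foldr Exists ys \<phi>) = fv \<phi> - set ys"
  by (induction ys) auto
lemma fv_conjs: "fv (foldr Conj ps q) = (\<Union>p\<in>set ps. fv p) \<union> fv q"
  by (induction ps) auto
lemma rels_exs: "rels (foldr Exists ys \<phi>) = rels \<phi>"
  by (induction ys) auto
lemma rels_conjs: "rels (foldr Conj ps q) = concat (map rels ps) @ rels q"
  by (induction ps) auto
lemma cq_exs: "is_cq (foldr Exists ys \<phi>) = is_cq \<phi>"
  by (induction ys) auto
lemma cq_conjs: "is_cq (foldr Conj ps q) \<longleftrightarrow> (\<forall>p\<in>set ps. is_cq p) \<and> is_cq q"
  by (induction ps) auto
lemma wf_exs: "wf_fml \<tau> (foldr Exists ys \<phi>) = wf_fml \<tau> \<phi>"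
  by (induction ys) auto
lemma wf_conjs: "wf_fml \<tau> (foldr Conj ps q) \<longleftrightarrow> (\<forall>p\<in>set ps. wf_fml \<tau> p) \<and> wf_fml \<tau> q"
  by (induction ps) auto
lemma consts_exs: "fml_consts (foldr Exists ys \<phi>) = fml_consts \<phi>"
  by (induction ys) auto
lemma consts_conjs: "fml_consts (foldr Conj ps q) = (\<Union>p\<in>set ps. fml_consts p) \<union> fml_consts q"
  by (induction ps) auto

lemma assign_upt: "length as = k \<Longrightarrow> v < k \<Longrightarrow> assign [0..<k] as v = as ! v"
  unfolding assign_def using map_of_zip_nth[of "[0..<k]" as v] by simp

lemma finite_consts: "finite (fml_consts \<phi>)"
proof (induction \<phi>)
  case (Atom R ts)
  have "\<And>t. finite (trm_csts t)" by (case_tac t) auto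
  then show ?case by auto
next
  case (Equ s t)
  have "\<And>t. finite (trm_csts t)" by (case_tac t) auto
  then show ?case by auto
qed auto

lemma finite_adom: "finite D \<Longrightarrow> finite (adom D)"
  unfolding adom_def by auto

lemma finite_view:
  assumes "finite \<tau>'" "finite D"
  shows "finite (apply_view \<tau>' V D)"
proof -
  let ?B = "\<Union>R\<in>\<tau>'. Pair R ` {as. set as \<subseteq> adom D \<union> fml_consts (snd (V R)) \<and> length as = arity R}"
  have "finite ?B" using assms finite_adom finite_consts
    by (intro finite_UN_I) (auto intro!: finite_lists_length_eq)
  moreover have "apply_view \<tau>' V D \<subseteq> ?B" unfolding apply_view_def by auto
  ultimately show ?thesis by (rule finite_subset[rotated])
qed


definition Sn :: "fact \<Rightarrow> rel" where "Sn f = (2 * to_nat f, 1)"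
definition Tn :: "nat \<Rightarrow> rel \<Rightarrow> rel" where "Tn n R = (2 * to_nat R + 1, arity R + n)"

lemma Sn_inj[simp]: "Sn f = Sn g \<longleftrightarrow> f = g"
  unfolding Sn_def by (simp add: to_nat_split)
lemma Tn_inj[simp]: "Tn n R = Tn n R' \<longleftrightarrow> R = R'"
  unfolding Tn_def by (auto simp: to_nat_split)
lemma Sn_Tn[simp]: "Sn f \<noteq> Tn n R"
  unfolding Sn_def Tn_def by (auto; presburger)
lemma Tn_Sn[simp]: "Tn n R \<noteq> Sn f"
  unfolding Sn_def Tn_def by (auto; presburger)
lemma arity_Sn[simp]: "arity (Sn f) = 1" unfolding Sn_def arity_def by simp
lemma arity_Tn[simp]: "arity (Tn n R) = arity R + n" unfolding Tn_def arity_def by simp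

lemma ti_image:
  fixes h :: "fact \<Rightarrow> fact"
  assumes ti: "tuple_independent P" and inj: "inj h" and disj: "C \<inter> range h = {}"
  shows "tuple_independent (map_pmf (\<lambda>D. C \<union> h ` D) P)"
  unfolding tuple_independent_def
proof (intro allI impI)
  fix F0 :: "fact set" assume fin: "finite F0"
  let ?p = "\<lambda>g. measure_pmf.prob P {D. g \<in> C \<union> h ` D}"
  have lhs: "measure_pmf.prob (map_pmf (\<lambda>D. C \<union> h ` D) P) {I. F0 \<subseteq> I}
      = measure_pmf.prob P {D. F0 \<subseteq> C \<union> h ` D}" unfolding measure_map_pmf vimage_def by simp
  have rhs: "(\<Prod>f\<in>F0. measure_pmf.prob (map_pmf (\<lambda>D. C \<union> h ` D) P) {I. f \<in> I}) = prod ?p F0"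
    unfolding measure_map_pmf vimage_def by simp
  have key: "measure_pmf.prob P {D. F0 \<subseteq> C \<union> h ` D} = prod ?p F0"
  proof (cases "F0 \<subseteq> C \<union> range h")
    case True
    define F1 where "F1 = h -` F0"
    have fin1: "finite F1" unfolding F1_def using fin inj by (simp add: finite_vimageI)
    have hmem: "h f \<in> C \<union> h ` D \<longleftrightarrow> f \<in> D" for f D
    proof -
      have "h f \<notin> C" using disj by blast
      then show ?thesis using inj_image_mem_iff[OF inj] by blast
    qed
    have "{D. F0 \<subseteq> C \<union> h ` D} = {D. F1 \<subseteq> D}"
    proof (intro Collect_cong iffI)
      fix D assume "F0 \<subseteq> C \<union> h ` D"
      then show "F1 \<subseteq> D"
      proof (intro subsetI)
        fix f assume "F0 \<subseteq> C \<union> h ` D" "f \<in> F1"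
        then have "h f \<in> C \<union> h ` D" unfolding F1_def by blast
        then show "f \<in> D" using hmem by blast
      qed
    next
      fix D assume "F1 \<subseteq> D"
      show "F0 \<subseteq> C \<union> h ` D"
      proof
        fix g assume g: "g \<in> F0"
        show "g \<in> C \<union> h ` D"
        proof (cases "g \<in> C")
          case False
          then obtain f where f: "g = h f" using True g by blast
          then have "f \<in> F1" unfolding F1_def using g by simp
          then show ?thesis using f \<open>F1 \<subseteq> D\<close> by blast
        qed simp
      qed
    qed
    then have "measure_pmf.prob P {D. F0 \<subseteq> C \<union> h ` D} = (\<Prod>f\<in>F1. measure_pmf.prob P {D. f \<in> D})"
      using ti fin1 unfolding tuple_independent_def by simp
    also have "\<dots> = (\<Prod>f\<in>F1. ?p (h f))" using hmem by simp
    also have "\<dots> = prod ?p (h ` F1)" using prod.reindex[OF inj_on_subset[OF inj subset_UNIV], of ?p F1] by (simp add: comp_def)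
    also have "h ` F1 = F0 - C"
    proof -
      have "h ` F1 = F0 \<inter> range h" unfolding F1_def by (rule image_vimage_eq)
      also have "\<dots> = F0 - C" using True disj by blast
      finally show ?thesis .
    qed
    also have "prod ?p (F0 - C) = prod ?p F0"
      by (rule prod.mono_neutral_right[symmetric]) (use fin in auto)
    finally show ?thesis .
  next
    case False
    then obtain g where g: "g \<in> F0" "g \<notin> C" "g \<notin> range h" by blast
    have "{D. F0 \<subseteq> C \<union> h ` D} = {}" using g by auto
    moreover have "?p g = 0"
    proof -
      have "{D. g \<in> C \<union> h ` D} = {}" using g by blast
      then show ?thesis by simp
    qed
    moreover have "prod ?p F0 = 0" using fin g(1) \<open>?p g = 0\<close> by (intro prod_zero) blast+
    ultimately show ?thesis by simp
  qed
  show "measure_pmf.prob (map_pmf (\<lambda>D. C \<union> h ` D) P) {I. F0 \<subseteq> I} =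
         (\<Prod>f\<in>F0. measure_pmf.prob (map_pmf (\<lambda>D. C \<union> h ` D) P) {I. f \<in> I})"
    using lhs rhs key by simp
qed


definition chi :: "fact list \<Rightarrow> inst \<Rightarrow> nat list" where
  "chi fs M = map (\<lambda>f. if f \<in> M then 1 else 0) fs"

definition Tfacts :: "rel set \<Rightarrow> view \<Rightarrow> inst set \<Rightarrow> fact list \<Rightarrow> inst" where
  "Tfacts \<tau>' V \<D> fs = (\<lambda>(M, (R, as)). (Tn (length fs) R, as @ chi fs M)) ` (SIGMA M:\<D>. apply_view \<tau>' V M)"

definition Cset :: "rel set \<Rightarrow> view \<Rightarrow> inst set \<Rightarrow> fact list \<Rightarrow> inst" where
  "Cset \<tau>' V \<D> fs = (\<lambda>f. (Sn f, [0])) ` set fs \<union> Tfacts \<tau>' V \<D> fs"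

definition hS :: "fact \<Rightarrow> fact" where "hS f = (Sn f, [1])"

definition enc :: "rel set \<Rightarrow> view \<Rightarrow> inst set \<Rightarrow> fact list \<Rightarrow> inst \<Rightarrow> inst" where
  "enc \<tau>' V \<D> fs D = Cset \<tau>' V \<D> fs \<union> hS ` D"

definition body :: "fact list \<Rightarrow> rel \<Rightarrow> fml" where
  "body fs R = foldr Conj (map (\<lambda>i. Atom (Sn (fs ! i)) [Var (arity R + i)]) [0..<length fs])
      (Atom (Tn (length fs) R) (map Var [0..<arity R + length fs]))"

definition W :: "fact list \<Rightarrow> view" where
  "W fs R = ([0..<arity R], foldr Exists [arity R..<arity R + length fs] (body fs R))"

lemma sat_body: "sat A D \<tau> (body fs R) \<longleftrightarrow>
   (\<forall>i<length fs. (Sn (fs ! i), [\<tau> (arity R + i)]) \<in> D) \<and>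
   (Tn (length fs) R, map \<tau> [0..<arity R + length fs]) \<in> D"
  unfolding body_def sat_conjs by (auto simp: comp_def)

lemma consts_W': "fml_consts (foldr Exists ys (body fs R)) = {}"
  by (simp add: body_def consts_exs consts_conjs)
lemma consts_W: "fml_consts (snd (W fs R)) = {}"
  by (simp add: W_def consts_W')

lemma fv_W: "fv (snd (W fs R)) \<subseteq> set (fst (W fs R))"
  by (auto simp add: W_def body_def fv_exs fv_conjs)

lemma rels_W: "rels (snd (W fs R)) = map Sn fs @ [Tn (length fs) R]"
proof -
  have "concat (map rels (map (\<lambda>i. Atom (Sn (fs ! i)) [Var (arity R + i)]) [0..<length fs]))
      = map (\<lambda>i. Sn (fs ! i)) [0..<length fs]"
    by (induction "[0..<length fs]") (simp_all add: comp_def concat_map_singleton)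
  also have "\<dots> = map Sn fs" by (rule nth_equalityI) auto
  finally show ?thesis by (simp add: W_def body_def rels_exs rels_conjs)
qed

lemma hS_inj: "inj hS" unfolding hS_def inj_def by auto

lemma hS_Cset: "Cset \<tau>' V \<D> fs \<inter> range hS = {}"
  unfolding Cset_def Tfacts_def hS_def by auto

lemma hS_enc: "hS f \<in> enc \<tau>' V \<D> fs D \<longleftrightarrow> f \<in> D"
  using hS_Cset[of \<tau>' V \<D> fs] hS_inj unfolding enc_def by (auto simp: inj_eq)

lemma adomI: "x \<in> D \<Longrightarrow> a \<in> set (snd x) \<Longrightarrow> a \<in> adom D"
  unfolding adom_def by auto

lemma enc_view:
  assumes V: "is_view is_ucq \<tau> \<tau>' V" and fs: "set fs = \<Union>\<D>" and D: "D \<in> \<D>"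
  shows "apply_view \<tau>' (W fs) (enc \<tau>' V \<D> fs D) = apply_view \<tau>' V D"
proof (intro equalityI subsetI)
  fix x assume x: "x \<in> apply_view \<tau>' V D"
  then obtain R as where xe: "x = (R, as)" and R: "R \<in> \<tau>'" "length as = arity R"
    unfolding apply_view_def by blast
  define k where "k = arity R"
  define n where "n = length fs"
  let ?E = "enc \<tau>' V \<D> fs D"
  have tf: "(Tn n R, as @ chi fs D) \<in> ?E"
    unfolding enc_def Cset_def Tfacts_def n_def using D x xe by force
  have ad: "set (as @ chi fs D) \<subseteq> adom ?E" using adomI[OF tf] by auto
  define \<tau> where "\<tau> v = (if k \<le> v \<and> v < k + n then chi fs D ! (v - k) else assign [0..<k] as v)" for v
  have lc: "length (chi fs D) = n" unfolding chi_def n_def by simp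
  have m: "map \<tau> [0..<k + n] = as @ chi fs D"
  proof (rule nth_equalityI)
    show "length (map \<tau> [0..<k + n]) = length (as @ chi fs D)" using lc R k_def by simp
    fix i assume "i < length (map \<tau> [0..<k + n])"
    then show "map \<tau> [0..<k + n] ! i = (as @ chi fs D) ! i"
      using R k_def by (auto simp: \<tau>_def nth_append assign_upt)
  qed
  have sf: "(Sn (fs ! i), [\<tau> (k + i)]) \<in> ?E" if "i < n" for i
  proof (cases "fs ! i \<in> D")
    case True
    then have "hS (fs ! i) \<in> ?E" using hS_enc by blast
    then show ?thesis using True that unfolding \<tau>_def hS_def chi_def n_def by simp
  next
    case False
    have "(Sn (fs ! i), [0]) \<in> ?E" unfolding enc_def Cset_def using that n_def by auto
    then show ?thesis using False that unfolding \<tau>_def chi_def n_def by simp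
  qed
  have inA: "\<tau> v \<in> adom ?E" if "v \<in> set [k..<k + n]" for v
  proof -
    have "\<tau> v \<in> set (map \<tau> [0..<k + n])" using that by auto
    then show ?thesis using m ad by auto
  qed
  have off: "\<tau> v = assign [0..<k] as v" if "v \<notin> set [k..<k + n]" for v
    using that unfolding \<tau>_def by auto
  have "sat (adom ?E) ?E \<tau> (body fs R)"
    unfolding sat_body using sf m k_def n_def tf by auto
  then have "sat (adom ?E) ?E (assign [0..<k] as) (foldr Exists [k..<k + n] (body fs R))"
    unfolding sat_exs using inA off by blast
  then show "x \<in> apply_view \<tau>' (W fs) ?E"
    unfolding apply_view_def xe using R ad k_def n_def
    by (intro CollectI exI[of _ R] exI[of _ as]) (simp add: W_def consts_W')
next
  fix x assume x: "x \<in> apply_view \<tau>' (W fs) (enc \<tau>' V \<D> fs D)"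
  let ?E = "enc \<tau>' V \<D> fs D"
  define n where "n = length fs"
  obtain R as where xe: "x = (R, as)" and R: "R \<in> \<tau>'" "length as = arity R"
    and s: "sat (adom ?E) ?E (assign [0..<arity R] as) (foldr Exists [arity R..<arity R + n] (body fs R))"
    using x unfolding apply_view_def W_def n_def by (auto simp: consts_W')
  define k where "k = arity R"
  obtain \<tau> where off: "\<And>v. v \<notin> set [k..<k + n] \<Longrightarrow> \<tau> v = assign [0..<k] as v"
    and sb: "sat (adom ?E) ?E \<tau> (body fs R)"
    using s unfolding sat_exs k_def by blast
  have sf: "\<And>i. i < n \<Longrightarrow> (Sn (fs ! i), [\<tau> (k + i)]) \<in> ?E"
    and tf: "(Tn n R, map \<tau> [0..<k + n]) \<in> ?E"
    using sb unfolding sat_body k_def n_def by auto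
  have "(Tn n R, map \<tau> [0..<k + n]) \<in> Tfacts \<tau>' V \<D> fs"
    using tf unfolding enc_def Cset_def hS_def by auto
  then obtain M R2 as2 where M: "M \<in> \<D>" "(R2, as2) \<in> apply_view \<tau>' V M"
    and eq: "Tn n R = Tn n R2" "map \<tau> [0..<k + n] = as2 @ chi fs M"
    unfolding Tfacts_def n_def by auto
  have "R2 = R" using eq(1) by simp
  have l2: "length as2 = k" using M(2) \<open>R2 = R\<close> k_def unfolding apply_view_def by auto
  have "as2 = take k (map \<tau> [0..<k + n])" using eq(2) l2 by simp
  also have "\<dots> = map \<tau> [0..<k]" by (simp add: take_map)
  also have "\<dots> = as"
    by (rule nth_equalityI) (use R k_def off in \<open>auto simp: assign_upt\<close>)
  finally have as2: "as2 = as" .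
  have chiM: "chi fs M ! i = \<tau> (k + i)" if "i < n" for i
  proof -
    have "map \<tau> [0..<k + n] ! (k + i) = \<tau> (k + i)" using that by simp
    then show ?thesis using eq(2) l2 by (simp add: nth_append)
  qed
  have "M \<subseteq> D"
  proof
    fix f assume f: "f \<in> M"
    then have "f \<in> set fs" using fs M(1) by auto
    then obtain i where i: "i < n" "fs ! i = f" unfolding n_def by (metis in_set_conv_nth)
    have "\<tau> (k + i) = 1" using chiM[OF i(1)] f i unfolding chi_def n_def by simp
    then have "(Sn f, [1]) \<in> ?E" using sf[OF i(1)] i by simp
    then show "f \<in> D" using hS_enc unfolding hS_def by blast
  qed
  then have "apply_view \<tau>' V M \<subseteq> apply_view \<tau>' V D" by (rule view_mono[OF V])
  then show "x \<in> apply_view \<tau>' V D" using M(2) xe as2 \<open>R2 = R\<close> by auto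
qed


lemma ucq_sjf: "L_TI_fin is_ucq \<subseteq> L_TI_fin is_sjfcq"
proof
  fix x assume "x \<in> L_TI_fin is_ucq"
  then obtain \<tau>' \<tau> \<D> P V where xe: "x = (\<tau>', apply_view \<tau>' V ` \<D>, map_pmf (apply_view \<tau>' V) P)"
    and ti: "ti_fin \<tau> \<D> P" and V: "is_view is_ucq \<tau> \<tau>' V"
    unfolding L_TI_fin_def by blast
  have finD: "finite \<D>" and tiP: "tuple_independent P" and ne: "\<D> \<noteq> {}"
    and sP: "set_pmf P \<subseteq> \<D>" and io: "\<And>D. D \<in> \<D> \<Longrightarrow> instance_over \<tau> D"
    using ti unfolding ti_fin_def pdb_def by auto
  have sch: "schema \<tau>'" using V unfolding is_view_def by blast
  have finF: "finite (\<Union>\<D>)" using finD io unfolding instance_over_def by auto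
  obtain fs where fs: "set fs = \<Union>\<D>" "distinct fs" using finite_distinct_list[OF finF] by blast
  define n where "n = length fs"
  define \<tau>0 where "\<tau>0 = Sn ` set fs \<union> Tn n ` \<tau>'"
  define E where "E = enc \<tau>' V \<D> fs"
  have finT: "finite (Tfacts \<tau>' V \<D> fs)"
    unfolding Tfacts_def using finD sch io
    by (intro finite_imageI finite_SigmaI finite_view) (auto simp: schema_def instance_over_def)
  have instE: "instance_over \<tau>0 (E D)" if D: "D \<in> \<D>" for D
  proof -
    have "finite D" using io[OF D] unfolding instance_over_def by blast
    then have "finite (E D)" unfolding E_def enc_def Cset_def using finT by auto
    moreover have "fact_over \<tau>0 f" if f: "f \<in> E D" for f
    proof -
      consider (a) g where "g \<in> set fs" "f = (Sn g, [0])" | (b) "f \<in> Tfacts \<tau>' V \<D> fs"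
        | (c) g where "g \<in> D" "f = hS g"
        using f unfolding E_def enc_def Cset_def by blast
      then show ?thesis
      proof cases
        case a then show ?thesis unfolding fact_over_def \<tau>0_def by auto
      next
        case b
        then obtain M R as where "f = (Tn n R, as @ chi fs M)" "(R, as) \<in> apply_view \<tau>' V M"
          unfolding Tfacts_def n_def by auto
        then show ?thesis unfolding fact_over_def \<tau>0_def apply_view_def chi_def n_def by auto
      next
        case c
        then have "g \<in> set fs" using fs D by auto
        then show ?thesis using c unfolding fact_over_def \<tau>0_def hS_def by auto
      qed
    qed
    ultimately show ?thesis unfolding instance_over_def by blast
  qed
  have E_alt: "E = (\<lambda>D. Cset \<tau>' V \<D> fs \<union> hS ` D)" unfolding E_def enc_def by (rule ext) simp
  have ti0: "ti_fin \<tau>0 (E ` \<D>) (map_pmf E P)"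
    unfolding ti_fin_def pdb_def
  proof (intro conjI)
    show "schema \<tau>0" using sch unfolding schema_def \<tau>0_def by auto
    show "E ` \<D> \<noteq> {}" using ne by auto
    show "countable (E ` \<D>)" using finD by (simp add: countable_finite)
    show "\<forall>D\<in>E ` \<D>. instance_over \<tau>0 D" using instE by auto
    show "set_pmf (map_pmf E P) \<subseteq> E ` \<D>" using sP by auto
    show "finite (E ` \<D>)" using finD by auto
    show "tuple_independent (map_pmf E P)"
      unfolding E_alt by (rule ti_image[OF tiP hS_inj hS_Cset])
  qed
  have W: "is_view is_sjfcq \<tau>0 \<tau>' (W fs)"
    unfolding is_view_def
  proof (intro conjI ballI)
    show "schema \<tau>'" by (rule sch)
    fix R assume R: "R \<in> \<tau>'"
    show "length (fst (W fs R)) = arity R" "distinct (fst (W fs R))" by (simp_all add: W_def)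
    show "fv (snd (W fs R)) \<subseteq> set (fst (W fs R))" by (rule fv_W)
    have "\<forall>i<length fs. Sn (fs ! i) \<in> \<tau>0" unfolding \<tau>0_def by auto
    then show "wf_fml \<tau>0 (snd (W fs R))"
      using R unfolding W_def body_def \<tau>0_def n_def by (auto simp: wf_exs wf_conjs)
    have "distinct (map Sn fs)" using fs(2) by (simp add: distinct_map inj_on_def)
    then show "is_sjfcq (snd (W fs R))"
      unfolding is_sjfcq_def rels_W by (auto simp: W_def body_def cq_exs cq_conjs)
  qed
  have eqv: "apply_view \<tau>' (W fs) (E D) = apply_view \<tau>' V D" if "D \<in> \<D>" for D
    unfolding E_def by (rule enc_view[OF V fs(1) that])
  have "apply_view \<tau>' (W fs) ` E ` \<D> = apply_view \<tau>' V ` \<D>"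
    using eqv by (auto simp: image_image)
  moreover have "map_pmf (apply_view \<tau>' (W fs)) (map_pmf E P) = map_pmf (apply_view \<tau>' V) P"
    unfolding map_pmf_comp using eqv sP by (intro map_pmf_cong) auto
  ultimately have "x = (\<tau>', apply_view \<tau>' (W fs) ` (E ` \<D>), map_pmf (apply_view \<tau>' (W fs)) (map_pmf E P))"
    using xe by simp
  then show "x \<in> L_TI_fin is_sjfcq"
    unfolding L_TI_fin_def using ti0 W by blast
qed

theorem corollary7p4:
  shows "L_TI_fin is_sjfcq = L_TI_fin is_cq \<and> L_TI_fin is_cq = L_TI_fin is_ucq"
proof -
  have a: "L_TI_fin is_sjfcq \<subseteq> L_TI_fin is_cq" by (rule L_mono) (simp add: is_sjfcq_def)
  have b: "L_TI_fin is_cq \<subseteq> L_TI_fin is_ucq" by (rule L_mono) (rule cq_ucq)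
  show ?thesis using a b ucq_sjf by blast
qed

end
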